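(* Let $n\ge2$, let $T:\mathbb R^n\to\mathbb R^n$ be a symmetric linear isomorphism, and define $f:\mathcal K_0^n\to\mathcal K_0^n$ by $f(A)=T(A^\circ)$. (1) If $T$ is positive-definite, then $f$ is topologically conjugate with the polar mapping $A\mapsto A^\circ$ (there is a homeomorphism $\Phi$ of $(\mathcal K_0^n,d_{AW})$ with $f=\Phi\circ\alpha\circ\Phi^{-1}$); in particular $f$ has a unique fixed point. (2) If $T$ is not positive-definite, then $f$ has infinitely many fixed points in $\mathcal K_{(0),b}^n$.
   Context: $\mathcal K_0^n$: closed convex subsets of $\mathbb R^n$ containing $0$, with the Attouch–Wets metric $d_{AW}(A,K)=\sup_{j\in\mathbb N}\min\{\frac1j,\sup_{\|x\|<j}|d(x,A)-d(x,K)|\}$, $d(x,A)=\inf_{a\in A}\|x-a\|$. $\mathcal K_{(0),b}^n$: compact convex sets containing $0$ in their interior. Polar: $A^\circ=\{x:\sup_{a\in A}\langle a,x\rangle\le1\}$; $\alpha(A)=A^\circ$. *)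

theory Defs
  imports "HOL-Analysis.Analysis"
begin

definition K0 :: "('a::euclidean_space) set set" where
  "K0 = {A. closed A \<and> convex A \<and> 0 \<in> A}"

definition K0b :: "('a::euclidean_space) set set" where
  "K0b = {A. compact A \<and> convex A \<and> 0 \<in> interior A}"

definition polar :: "('a::euclidean_space) set \<Rightarrow> 'a set" where
  "polar A = {x. \<forall>a\<in>A. a \<bullet> x \<le> 1}"

definition dAW :: "('a::euclidean_space) set \<Rightarrow> 'a set \<Rightarrow> real" where
  "dAW A K = (SUP j\<in>{1::nat..}. min (1 / real j)
       (SUP x\<in>{x. norm x < real j}. \<bar>infdist x A - infdist x K\<bar>))"

definition aw_continuous :: "('a::euclidean_space set \<Rightarrow> 'a set) \<Rightarrow> bool" where
  "aw_continuous F \<longleftrightarrow> (\<forall>A\<in>K0. \<forall>e>0. \<exists>d>0. \<forall>B\<in>K0. dAW A B < d \<longrightarrow> dAW (F A) (F B) < e)"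

definition aw_homeomorphism :: "('a::euclidean_space set \<Rightarrow> 'a set) \<Rightarrow> ('a set \<Rightarrow> 'a set) \<Rightarrow> bool" where
  "aw_homeomorphism F G \<longleftrightarrow> F ` K0 \<subseteq> K0 \<and> G ` K0 \<subseteq> K0 \<and>
     (\<forall>A\<in>K0. G (F A) = A) \<and> (\<forall>A\<in>K0. F (G A) = A) \<and>
     aw_continuous F \<and> aw_continuous G"

end

theory Submission
  imports Defs
begin

lemma msym:
  fixes M :: "real^'n^'n"
  assumes "transpose M = M"
  shows "(M *v x) \<bullet> y = x \<bullet> (M *v y)"
proof -
  have "x \<bullet> (M *v y) = (x v* M) \<bullet> y" by (simp add: dot_lmul_matrix)
  also have "x v* M = x v* transpose M" using assms by simp
  also have "\<dots> = M *v x" by simp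
  finally show ?thesis by simp
qed

lemma eigen_of_max:
  fixes M :: "real^'n^'n"
  assumes sym: "transpose M = M" and S: "subspace S" and inv: "\<forall>x\<in>S. M *v x \<in> S"
    and v: "v \<in> S" "norm v = 1"
    and mx: "\<forall>x\<in>S. norm x = 1 \<longrightarrow> x \<bullet> (M *v x) \<le> v \<bullet> (M *v v)"
  shows "M *v v = (v \<bullet> (M *v v)) *\<^sub>R v"
proof -
  define l where "l = v \<bullet> (M *v v)"
  have q: "x \<bullet> (M *v x) \<le> l * (x \<bullet> x)" if "x \<in> S" for x
  proof (cases "x = 0")
    case True then show ?thesis by simp
  next
    case False
    define y where "y = (1 / norm x) *\<^sub>R x"
    have "y \<in> S" using that S unfolding y_def by (simp add: subspace_scale)
    moreover have "norm y = 1" using False by (simp add: y_def)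
    ultimately have "y \<bullet> (M *v y) \<le> l" using mx l_def by auto
    moreover have "y \<bullet> (M *v y) = (x \<bullet> (M *v x)) / (norm x)^2"
      by (simp add: y_def matrix_vector_mult_scaleR power2_eq_square)
    moreover have "x \<bullet> x = (norm x)^2" by (simp add: power2_norm_eq_inner)
    moreover have "(norm x)^2 > 0" using False by simp
    ultimately show ?thesis by (simp add: divide_le_eq mult.commute)
  qed
  define w where "w = M *v v - l *\<^sub>R v"
  have wS: "w \<in> S" unfolding w_def using inv v S by (simp add: subspace_diff subspace_scale)
  have vv: "v \<bullet> v = 1" using v by (simp add: norm_eq_1)
  have vw: "v \<bullet> w = 0" unfolding w_def l_def by (simp add: inner_diff_right vv)
  have wMv: "w \<bullet> (M *v v) = w \<bullet> w"
  proof -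
    have "M *v v = w + l *\<^sub>R v" by (simp add: w_def)
    then have "w \<bullet> (M *v v) = w \<bullet> w + l * (w \<bullet> v)" by (simp add: inner_add_right)
    then show ?thesis using vw by (simp add: inner_commute)
  qed
  have vMw: "v \<bullet> (M *v w) = w \<bullet> w"
    using wMv msym[OF sym, of v w] by (simp add: inner_commute)
  define C where "C = l * (w \<bullet> w) - w \<bullet> (M *v w)"
  have key: "2 * t * (w \<bullet> w) \<le> t^2 * C" for t
  proof -
    have "v + t *\<^sub>R w \<in> S" using v wS S by (simp add: subspace_add subspace_scale)
    then have "(v + t *\<^sub>R w) \<bullet> (M *v (v + t *\<^sub>R w)) \<le> l * ((v + t *\<^sub>R w) \<bullet> (v + t *\<^sub>R w))"
      by (rule q)
    then show ?thesis
      by (simp add: matrix_vector_right_distrib matrix_vector_mult_scaleR inner_add_left inner_add_right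
          vw vv vMw wMv inner_commute[of w v] l_def[symmetric] C_def power2_eq_square algebra_simps)
  qed
  have "w \<bullet> w = 0"
  proof (rule ccontr)
    assume "w \<bullet> w \<noteq> 0"
    then have p: "w \<bullet> w > 0" by (simp add: order_le_neq_trans)
    define t where "t = (w \<bullet> w) / (\<bar>C\<bar> + 1)"
    have tp: "t > 0" using p by (simp add: t_def)
    have "2 * t * (w \<bullet> w) \<le> t^2 * C" by (rule key)
    then have "2 * (w \<bullet> w) \<le> t * C" using tp by (simp add: power2_eq_square)
    also have "t * C \<le> t * \<bar>C\<bar>" using tp by (simp add: mult_left_mono)
    also have "t * \<bar>C\<bar> < w \<bullet> w" using p unfolding t_def
      by (simp add: divide_less_eq field_simps)
    finally show False using p by simp
  qed
  then have "w = 0" by simp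
  then show ?thesis by (simp add: w_def l_def)
qed

lemma spectral_sub:
  fixes M :: "real^'n^'n"
  assumes sym: "transpose M = M"
  shows "subspace S \<Longrightarrow> (\<forall>x\<in>S. M *v x \<in> S) \<Longrightarrow>
     \<exists>B. B \<subseteq> S \<and> span B = S \<and> pairwise orthogonal B \<and>
        (\<forall>b\<in>B. norm b = 1 \<and> (\<exists>c. M *v b = c *\<^sub>R b))"
proof (induction "dim S" arbitrary: S rule: less_induct)
  case (less S)
  show ?case
  proof (cases "S \<subseteq> {0}")
    case True
    then have "S = {0}" using less.prems subspace_0 by blast
    then show ?thesis by (intro exI[of _ "{}"]) auto
  next
    case False
    then obtain x where x: "x \<in> S" "x \<noteq> 0" by auto
    define K where "K = S \<inter> sphere 0 1"
    have "(1 / norm x) *\<^sub>R x \<in> K" using x less.prems by (simp add: K_def subspace_scale)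
    then have Kne: "K \<noteq> {}" by auto
    have Kc: "compact K" unfolding K_def
      using closed_subspace[OF less.prems(1)] by (simp add: compact_Int_closed closed_Int_compact)
    have "continuous_on K (\<lambda>x. x \<bullet> (M *v x))"
      by (intro continuous_intros linear_continuous_on) (simp add: linear_linear[symmetric])
    then obtain v where v: "v \<in> K" and vmax: "\<forall>y\<in>K. y \<bullet> (M *v y) \<le> v \<bullet> (M *v v)"
      using continuous_attains_sup[OF Kc Kne] by blast
    have vS: "v \<in> S" and vn: "norm v = 1" using v by (auto simp: K_def)
    have ev: "M *v v = (v \<bullet> (M *v v)) *\<^sub>R v"
      by (rule eigen_of_max[OF sym less.prems vS vn]) (use vmax in \<open>auto simp: K_def\<close>)
    define S' where "S' = S \<inter> {y. v \<bullet> y = 0}"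
    have S'sub: "subspace S'" unfolding S'_def
      using less.prems(1) subspace_hyperplane[of v] by (simp add: subspace_inter)
    have S'inv: "\<forall>y\<in>S'. M *v y \<in> S'"
    proof
      fix y assume y: "y \<in> S'"
      have "v \<bullet> (M *v y) = (M *v v) \<bullet> y" using msym[OF sym, of v y] by simp
      also have "\<dots> = (v \<bullet> (M *v v)) * (v \<bullet> y)" by (subst ev) simp
      also have "\<dots> = 0" using y by (simp add: S'_def)
      finally show "M *v y \<in> S'" using y less.prems(2) by (auto simp: S'_def)
    qed
    have "span S' \<subset> span S"
    proof -
      have "S' \<subseteq> S" by (auto simp: S'_def)
      moreover have "v \<notin> S'" using vn by (auto simp: S'_def norm_eq_1)
      ultimately show ?thesis using vS S'sub less.prems(1) by (metis psubsetI span_eq_iff)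
    qed
    then have "dim S' < dim S" by (rule dim_psubset)
    then obtain B where B: "B \<subseteq> S'" "span B = S'" "pairwise orthogonal B"
        "\<forall>b\<in>B. norm b = 1 \<and> (\<exists>c. M *v b = c *\<^sub>R b)"
      using less.hyps S'sub S'inv by blast
    show ?thesis
    proof (intro exI[of _ "insert v B"] conjI)
      show "insert v B \<subseteq> S" using B(1) vS by (auto simp: S'_def)
      show "span (insert v B) = S"
      proof
        show "span (insert v B) \<subseteq> S"
          using \<open>insert v B \<subseteq> S\<close> less.prems(1) by (simp add: span_minimal)
        show "S \<subseteq> span (insert v B)"
        proof
          fix y assume y: "y \<in> S"
          have "y - (v \<bullet> y) *\<^sub>R v \<in> S'"
            using y vS less.prems(1) vn by (simp add: S'_def subspace_diff subspace_scale inner_diff_right norm_eq_1)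
          then have "y - (v \<bullet> y) *\<^sub>R v \<in> span (insert v B)"
            using B(2) by (metis span_mono subset_insertI subsetD)
          moreover have "(v \<bullet> y) *\<^sub>R v \<in> span (insert v B)" by (simp add: span_base span_mul)
          ultimately show "y \<in> span (insert v B)" by (metis diff_add_cancel span_add)
        qed
      qed
      show "pairwise orthogonal (insert v B)"
        using B(1,3) by (auto simp: pairwise_insert S'_def orthogonal_def inner_commute)
      show "\<forall>b\<in>insert v B. norm b = 1 \<and> (\<exists>c. M *v b = c *\<^sub>R b)"
        using B(4) vn ev by blast
    qed
  qed
qed


lemma infdist_approx:
  assumes "A \<noteq> {}" "infdist x A < r"
  shows "\<exists>a\<in>A. dist x a < r"
proof -
  have "(INF a\<in>A. dist x a) < r" using assms by (simp add: infdist_notempty)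
  moreover have bdd: "bdd_below ((\<lambda>a. dist x a) ` A)" by (meson bdd_belowI2 zero_le_dist)
  ultimately show ?thesis using cINF_less_iff[OF assms(1) bdd] by simp
qed

lemma infdist_bnd:
  assumes "0 \<in> A" "0 \<in> B"
  shows "\<bar>infdist y A - infdist y B\<bar> \<le> norm y"
proof -
  have "infdist y A \<le> norm y" "infdist y B \<le> norm y"
    using infdist_le[OF assms(1), of y] infdist_le[OF assms(2), of y] by auto
  then show ?thesis using infdist_nonneg[of y A] infdist_nonneg[of y B] by linarith
qed

lemma dAW_ge:
  fixes A B :: "'a::euclidean_space set"
  assumes "0 \<in> A" "0 \<in> B" "j \<ge> 1" "norm y < real j"
  shows "min (1 / real j) \<bar>infdist y A - infdist y B\<bar> \<le> dAW A B"
proof -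
  define S where "S j = (SUP x\<in>{x::'a. norm x < real j}. \<bar>infdist x A - infdist x B\<bar>)" for j
  have "\<bar>infdist y A - infdist y B\<bar> \<le> S j" unfolding S_def
  proof (rule cSUP_upper)
    show "y \<in> {x. norm x < real j}" using assms by simp
    show "bdd_above ((\<lambda>x. \<bar>infdist x A - infdist x B\<bar>) ` {x. norm x < real j})"
    proof (rule bdd_aboveI2[of _ _ "real j"])
      fix x assume "x \<in> {x::'a. norm x < real j}"
      then have "norm x < real j" by simp
      then show "\<bar>infdist x A - infdist x B\<bar> \<le> real j" using infdist_bnd[OF assms(1,2), of x] by linarith
    qed
  qed
  then have "min (1 / real j) \<bar>infdist y A - infdist y B\<bar> \<le> min (1 / real j) (S j)" by simp
  also have "\<dots> \<le> dAW A B" unfolding dAW_def S_def[symmetric]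
  proof (rule cSUP_upper)
    show "j \<in> {1..}" using assms by simp
    show "bdd_above ((\<lambda>j. min (1 / real j) (S j)) ` {1..})"
      by (rule bdd_aboveI2[of _ _ 1]) (auto simp: min_le_iff_disj)
  qed
  finally show ?thesis .
qed

lemma dAW_le:
  fixes A B :: "'a::euclidean_space set"
  assumes "\<And>j. j \<ge> 1 \<Longrightarrow> 1 / real j \<le> c \<or> (\<forall>y::'a. norm y < real j \<longrightarrow> \<bar>infdist y A - infdist y B\<bar> \<le> c)"
  shows "dAW A B \<le> c"
  unfolding dAW_def
proof (rule cSUP_least)
  show "{1::nat..} \<noteq> {}" by auto
  fix j :: nat assume j: "j \<in> {1..}"
  show "min (1 / real j) (SUP x\<in>{x::'a. norm x < real j}. \<bar>infdist x A - infdist x B\<bar>) \<le> c"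
  proof (cases "1 / real j \<le> c")
    case True then show ?thesis by (simp add: min.coboundedI1)
  next
    case False
    then have h: "\<forall>y::'a. norm y < real j \<longrightarrow> \<bar>infdist y A - infdist y B\<bar> \<le> c" using assms j by auto
    have "(SUP x\<in>{x::'a. norm x < real j}. \<bar>infdist x A - infdist x B\<bar>) \<le> c"
    proof (rule cSUP_least)
      show "{x::'a. norm x < real j} \<noteq> {}" using j by (auto intro: exI[of _ 0])
    qed (use h in auto)
    then show ?thesis by (simp add: min.coboundedI2)
  qed
qed

lemma lin_close1:
  fixes g h :: "'a::euclidean_space \<Rightarrow> 'a"
  assumes lg: "linear g" and lh: "linear h" and hg: "\<And>x. h (g x) = x"
    and Kg: "Kg > 0" "\<And>x. norm (g x) \<le> Kg * norm x"
    and Kh: "Kh > 0" "\<And>x. norm (h x) \<le> Kh * norm x"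
    and A0: "0 \<in> A" and B0: "0 \<in> B" and eps: "\<epsilon> \<ge> 0" and r: "r > 0"
    and close: "\<And>y. norm y < Kh * (2 * r + 1) \<Longrightarrow> \<bar>infdist y A - infdist y B\<bar> \<le> \<epsilon>"
    and x: "norm x < r"
  shows "infdist x (g ` B) \<le> infdist x (g ` A) + Kg * \<epsilon>"
proof (rule field_le_epsilon)
  fix e :: real assume e: "e > 0"
  define \<delta> where "\<delta> = min (1/2) (e / (1 + Kg))"
  have dp: "\<delta> > 0" using e Kg by (simp add: \<delta>_def)
  have d1: "\<delta> \<le> 1/2" unfolding \<delta>_def by (rule min.cobounded1)
  have d2: "(1 + Kg) * \<delta> \<le> e"
  proof -
    have "\<delta> \<le> e / (1 + Kg)" unfolding \<delta>_def by (rule min.cobounded2)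
    then have "(1 + Kg) * \<delta> \<le> (1 + Kg) * (e / (1 + Kg))" using Kg(1) by (intro mult_left_mono) auto
    also have "\<dots> = e" using Kg(1) by simp
    finally show ?thesis .
  qed
  have g0: "g 0 = 0" using lg by (simp add: linear_0)
  have gAne: "g ` A \<noteq> {}" using A0 by auto
  have ixA: "infdist x (g ` A) \<le> norm x"
    using infdist_le[of "g 0" "g ` A" x] A0 g0 by auto
  obtain a where a: "a \<in> A" "dist x (g a) < infdist x (g ` A) + \<delta>"
    using infdist_approx[OF gAne, of x "infdist x (g ` A) + \<delta>"] dp by auto
  have "norm (g a) \<le> norm x + dist x (g a)"
    using norm_triangle_ineq[of x "g a - x"] by (simp add: dist_norm norm_minus_commute)
  then have nga: "norm (g a) < 2 * r + 1" using a ixA x d1 by linarith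
  have "norm a \<le> Kh * norm (g a)" using Kh(2)[of "g a"] hg by simp
  also have "\<dots> < Kh * (2 * r + 1)" using nga Kh(1) by simp
  finally have "\<bar>infdist a A - infdist a B\<bar> \<le> \<epsilon>" by (rule close)
  then have "infdist a B < \<epsilon> + \<delta>" using a(1) dp by simp
  then obtain b where b: "b \<in> B" "dist a b < \<epsilon> + \<delta>"
    using infdist_approx[of B a] B0 by blast
  have "dist (g a) (g b) = norm (g (a - b))" using lg by (simp add: dist_norm linear_diff)
  also have "\<dots> \<le> Kg * dist a b" using Kg(2)[of "a - b"] by (simp add: dist_norm)
  also have "\<dots> \<le> Kg * (\<epsilon> + \<delta>)" using b Kg(1) by simp
  finally have gab: "dist (g a) (g b) \<le> Kg * (\<epsilon> + \<delta>)" .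
  have "infdist x (g ` B) \<le> dist x (g b)" using b by (simp add: infdist_le)
  also have "\<dots> \<le> dist x (g a) + dist (g a) (g b)" by (rule dist_triangle)
  also have "\<dots> \<le> infdist x (g ` A) + \<delta> + Kg * (\<epsilon> + \<delta>)" using a gab by simp
  also have "\<dots> = infdist x (g ` A) + Kg * \<epsilon> + (1 + Kg) * \<delta>" by (simp add: algebra_simps)
  also have "\<dots> \<le> infdist x (g ` A) + Kg * \<epsilon> + e" using d2 by simp
  finally show "infdist x (g ` B) \<le> infdist x (g ` A) + Kg * \<epsilon> + e" .
qed

lemma aw_cont_lin:
  fixes g h :: "'a::euclidean_space \<Rightarrow> 'a"
  assumes lg: "linear g" and lh: "linear h" and hg: "\<And>x. h (g x) = x"
  shows "aw_continuous (\<lambda>A. g ` A)"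
  unfolding aw_continuous_def
proof (intro ballI allI impI)
  fix A :: "'a set" and e :: real
  assume A: "A \<in> K0" and e: "e > 0"
  have A0: "0 \<in> A" using A by (simp add: K0_def)
  obtain Kg where Kg: "Kg > 0" "\<And>x. norm (g x) \<le> Kg * norm x" using linear_bounded_pos[OF lg] by blast
  obtain Kh where Kh: "Kh > 0" "\<And>x. norm (h x) \<le> Kh * norm x" using linear_bounded_pos[OF lh] by blast
  obtain n :: nat where n: "1 / real (Suc n) < e / 2" using e reals_Archimedean[of "e/2"]
    by (auto simp: inverse_eq_divide)
  define J where "J = Suc n"
  have J1: "J \<ge> 1" and Je: "1 / real J < e / 2" using n by (auto simp: J_def)
  obtain m :: nat where m: "Kh * (2 * real J + 1) \<le> real m" using real_arch_simple by blast
  define K where "K = Suc m"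
  have K1: "K \<ge> 1" and Km: "Kh * (2 * real J + 1) \<le> real K" using m by (auto simp: K_def)
  define d where "d = min (1 / real K) (e / (2 * Kg))"
  have dp: "d > 0" using K1 e Kg by (simp add: d_def)
  show "\<exists>d>0. \<forall>B\<in>K0. dAW A B < d \<longrightarrow> dAW (g ` A) (g ` B) < e"
  proof (intro exI[of _ d] conjI ballI impI dp)
    fix B assume B: "B \<in> K0" and dB: "dAW A B < d"
    have B0: "0 \<in> B" using B by (simp add: K0_def)
    have cl: "\<bar>infdist y A - infdist y B\<bar> \<le> d" if "norm y < Kh * (2 * real J + 1)" for y
    proof -
      have y: "norm y < real K" using that Km by simp
      have "min (1 / real K) \<bar>infdist y A - infdist y B\<bar> < d"
        using dAW_ge[OF A0 B0 K1 y] dB by simp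
      moreover have "d \<le> 1 / real K" by (simp add: d_def)
      ultimately show ?thesis
        by (metis min.cobounded2 min_less_iff_conj not_le order_le_less_trans) 
    qed
    have cl2: "\<bar>infdist x (g ` A) - infdist x (g ` B)\<bar> \<le> e / 2" if x: "norm x < real J" for x
    proof -
      have J0: "real J > 0" using J1 by simp
      have "infdist x (g ` B) \<le> infdist x (g ` A) + Kg * d"
        by (rule lin_close1[OF lg lh hg Kg Kh A0 B0 _ J0 cl x]) (use dp in auto)
      moreover have "infdist x (g ` A) \<le> infdist x (g ` B) + Kg * d"
        by (rule lin_close1[OF lg lh hg Kg Kh B0 A0 _ J0 _ x])
          (use dp cl in \<open>auto simp: abs_minus_commute\<close>)
      moreover have "Kg * d \<le> e / 2"
      proof -
        have "d \<le> e / (2 * Kg)" unfolding d_def by (rule min.cobounded2)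
        then have "Kg * d \<le> Kg * (e / (2 * Kg))" using Kg(1) by (intro mult_left_mono) auto
        also have "\<dots> = e / 2" using Kg(1) by simp
        finally show ?thesis .
      qed
      ultimately show ?thesis by linarith
    qed
    have "dAW (g ` A) (g ` B) \<le> e / 2"
    proof (rule dAW_le)
      fix j :: nat assume j: "j \<ge> 1"
      show "1 / real j \<le> e / 2 \<or> (\<forall>y. norm y < real j \<longrightarrow> \<bar>infdist y (g ` A) - infdist y (g ` B)\<bar> \<le> e / 2)"
      proof (cases "J \<le> j")
        case True
        then have "1 / real j \<le> 1 / real J" using J1 by (simp add: frac_le)
        then show ?thesis using Je by simp
      next
        case False
        then have "\<forall>y. norm y < real j \<longrightarrow> norm y < real J" by auto
        then show ?thesis using cl2 by blast
      qed
    qed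
    then show "dAW (g ` A) (g ` B) < e" using e by simp
  qed
qed


locale onb =
  fixes B :: "(real^'n) set"
  assumes fin: "finite B" and sp: "span B = UNIV" and po: "pairwise orthogonal B"
    and nb: "\<forall>b\<in>B. norm b = 1"
begin

lemma coord: "b0 \<in> B \<Longrightarrow> b0 \<bullet> (\<Sum>b\<in>B. c b *\<^sub>R b) = c b0"
proof -
  assume b0: "b0 \<in> B"
  have "b0 \<bullet> (\<Sum>b\<in>B. c b *\<^sub>R b) = (\<Sum>b\<in>B. c b * (b0 \<bullet> b))" by (simp add: inner_sum_right)
  also have "\<dots> = c b0 * (b0 \<bullet> b0) + (\<Sum>b\<in>B-{b0}. c b * (b0 \<bullet> b))"
    by (rule sum.remove[OF fin b0])
  also have "(\<Sum>b\<in>B-{b0}. c b * (b0 \<bullet> b)) = 0"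
    using po b0 by (intro sum.neutral) (auto simp: pairwise_def orthogonal_def)
  also have "b0 \<bullet> b0 = 1" using nb b0 by (simp add: norm_eq_1)
  finally show ?thesis by simp
qed

lemma expand: "x = (\<Sum>b\<in>B. (b \<bullet> x) *\<^sub>R b)"
proof -
  define y where "y = x - (\<Sum>b\<in>B. (b \<bullet> x) *\<^sub>R b)"
  have "orthogonal y b" if "b \<in> B" for b
  proof -
    have "b \<bullet> y = 0" unfolding y_def using coord[OF that, of "\<lambda>b. b \<bullet> x"] by (simp add: inner_diff_right)
    then show ?thesis by (simp add: orthogonal_def inner_commute)
  qed
  then have "orthogonal y y" using orthogonal_to_span[of y B y] sp by blast
  then have "y = 0" by (simp add: orthogonal_def)
  then show ?thesis by (simp add: y_def)
qed

lemma inner_expand: "x \<bullet> y = (\<Sum>b\<in>B. (b \<bullet> x) * (b \<bullet> y))"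
proof -
  have "x \<bullet> y = (\<Sum>b\<in>B. (b \<bullet> x) *\<^sub>R b) \<bullet> y" using expand[of x] by simp
  also have "\<dots> = (\<Sum>b\<in>B. (b \<bullet> x) * (b \<bullet> y))" by (simp add: inner_sum_left)
  finally show ?thesis .
qed

definition W :: "(real^'n \<Rightarrow> real) \<Rightarrow> real^'n \<Rightarrow> real^'n" where
  "W w x = (\<Sum>b\<in>B. (w b * (b \<bullet> x)) *\<^sub>R b)"

lemma W_coord: "b0 \<in> B \<Longrightarrow> b0 \<bullet> W w x = w b0 * (b0 \<bullet> x)"
  unfolding W_def by (rule coord)

lemma W_comp: "W w (W v x) = W (\<lambda>b. w b * v b) x"
  unfolding W_def[of w] W_def[of "\<lambda>b. w b * v b"]
  by (intro sum.cong refl) (simp add: W_coord)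

lemma W_one: "(\<And>b. b \<in> B \<Longrightarrow> w b = 1) \<Longrightarrow> W w x = x"
proof -
  assume h: "\<And>b. b \<in> B \<Longrightarrow> w b = 1"
  have "W w x = (\<Sum>b\<in>B. (b \<bullet> x) *\<^sub>R b)" unfolding W_def by (intro sum.cong refl) (simp add: h)
  also have "\<dots> = x" by (rule expand[symmetric])
  finally show ?thesis .
qed

lemma W_sym: "W w x \<bullet> y = x \<bullet> W w y"
proof -
  have "W w x \<bullet> y = (\<Sum>b\<in>B. (b \<bullet> W w x) * (b \<bullet> y))" by (rule inner_expand)
  also have "\<dots> = (\<Sum>b\<in>B. (b \<bullet> x) * (b \<bullet> W w y))"
    by (intro sum.cong refl) (simp add: W_coord)
  also have "\<dots> = x \<bullet> W w y" by (rule inner_expand[symmetric])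
  finally show ?thesis .
qed

lemma W_linear: "linear (W w)"
proof (rule linearI)
  fix x y show "W w (x + y) = W w x + W w y"
    unfolding W_def by (simp add: inner_add_right distrib_left scaleR_add_left sum.distrib)
next
  fix c :: real and x show "W w (c *\<^sub>R x) = c *\<^sub>R W w x"
    unfolding W_def by (simp add: scaleR_sum_right mult.left_commute)
qed

end


lemma spectral_basis:
  fixes M :: "real^'n^'n"
  assumes sym: "transpose M = M"
  obtains B \<mu> where "onb B" "\<forall>b\<in>B. M *v b = \<mu> b *\<^sub>R b"
proof -
  obtain B where B: "span B = UNIV" "pairwise orthogonal B"
      "\<forall>b\<in>B. norm b = 1 \<and> (\<exists>c. M *v b = c *\<^sub>R b)"
    using spectral_sub[OF sym, of UNIV] by auto
  have "independent B" using B by (intro pairwise_orthogonal_independent) auto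
  then have "finite B" by (rule independent_imp_finite)
  then have "onb B" using B by (simp add: onb_def)
  moreover have "\<forall>b\<in>B. \<exists>c. M *v b = c *\<^sub>R b" using B(3) by blast
  then obtain \<mu> where "\<forall>b\<in>B. M *v b = \<mu> b *\<^sub>R b" by (rule bchoice[THEN exE]) blast
  ultimately show ?thesis using that by blast
qed

lemma polar_closed: "closed (polar A)"
proof -
  have "polar A = (\<Inter>a\<in>A. {x. a \<bullet> x \<le> 1})" by (auto simp: polar_def)
  then show ?thesis by (simp add: closed_INT closed_halfspace_le)
qed

lemma polar_convex: "convex (polar A)"
proof -
  have "polar A = (\<Inter>a\<in>A. {x. a \<bullet> x \<le> 1})" by (auto simp: polar_def)
  then show ?thesis by (simp add: convex_INT convex_halfspace_le)
qed

lemma polar_zero: "0 \<in> polar A" by (simp add: polar_def)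

lemma polar_anti: "A \<subseteq> C \<Longrightarrow> polar C \<subseteq> polar A" by (auto simp: polar_def)

lemma polar_cball: "polar (cball (0::'a::euclidean_space) 1) = cball 0 1"
proof
  show "polar (cball (0::'a) 1) \<subseteq> cball 0 1"
  proof
    fix y :: 'a assume y: "y \<in> polar (cball 0 1)"
    show "y \<in> cball 0 1"
    proof (cases "y = 0")
      case False
      have "(1 / norm y) *\<^sub>R y \<in> cball 0 1" using False by simp
      moreover have "\<forall>a\<in>cball 0 1. a \<bullet> y \<le> 1" using y by (simp add: polar_def)
      ultimately have "((1 / norm y) *\<^sub>R y) \<bullet> y \<le> 1" by blast
      moreover have "((1 / norm y) *\<^sub>R y) \<bullet> y = (norm y)^2 / norm y"
        by (simp add: power2_norm_eq_inner)
      moreover have "(norm y)^2 / norm y = norm y" by (simp add: power2_eq_square)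
      ultimately have "norm y \<le> 1" by simp
      then show ?thesis by simp
    qed simp
  qed
  show "cball 0 1 \<subseteq> polar (cball (0::'a) 1)"
  proof
    fix y :: 'a assume y: "y \<in> cball 0 1"
    have "a \<bullet> y \<le> 1" if "a \<in> cball 0 1" for a
    proof -
      have "a \<bullet> y \<le> norm a * norm y" by (rule norm_cauchy_schwarz)
      also have "\<dots> \<le> 1 * 1" using that y by (intro mult_mono) auto
      finally show ?thesis by simp
    qed
    then show "y \<in> polar (cball 0 1)" by (auto simp: polar_def)
  qed
qed

lemma polar_image:
  assumes "\<And>x y. g x \<bullet> y = x \<bullet> g' y"
  shows "polar (g ` A) = {y. g' y \<in> polar A}"
  using assms by (auto simp: polar_def)


lemma (in onb) W_cong: "(\<And>b. b \<in> B \<Longrightarrow> w b = v b) \<Longrightarrow> W w x = W v x"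
  unfolding W_def by (intro sum.cong refl) simp

lemma M_as_W:
  fixes M :: "real^'n^'n"
  assumes sym: "transpose M = M" and ob: "onb B" and eig: "\<forall>b\<in>B. M *v b = \<mu> b *\<^sub>R b"
  shows "M *v x = onb.W B \<mu> x"
proof -
  interpret onb B by (rule ob)
  have "M *v x = (\<Sum>b\<in>B. (b \<bullet> (M *v x)) *\<^sub>R b)" by (rule expand)
  also have "\<dots> = W \<mu> x" unfolding W_def
  proof (intro sum.cong refl)
    fix b assume b: "b \<in> B"
    have "b \<bullet> (M *v x) = (M *v b) \<bullet> x" using msym[OF sym, of b x] by simp
    also have "\<dots> = \<mu> b * (b \<bullet> x)" using eig b by simp
    finally show "(b \<bullet> (M *v x)) *\<^sub>R b = (\<mu> b * (b \<bullet> x)) *\<^sub>R b" by simp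
  qed
  finally show ?thesis .
qed

lemma K0_image:
  fixes g :: "'a::euclidean_space \<Rightarrow> 'a"
  assumes lg: "linear g" and inv: "\<And>x. h (g x) = x" and A: "A \<in> K0"
  shows "g ` A \<in> K0"
proof -
  have "inj g" by (metis inv injI)
  then have "closed (g ` A)" using A lg by (intro closed_injective_linear_image) (auto simp: K0_def)
  moreover have "convex (g ` A)" using A lg by (intro convex_linear_image) (auto simp: K0_def)
  moreover have "0 \<in> g ` A" using A lg linear_0[OF lg] by (force simp: K0_def)
  ultimately show ?thesis by (simp add: K0_def)
qed

lemma part1:
  fixes M :: "real^'n^'n"
  assumes sym: "transpose M = M" and ob: "onb B" and eig: "\<forall>b\<in>B. M *v b = \<mu> b *\<^sub>R b"
    and pos: "\<forall>b\<in>B. \<mu> b > 0"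
  defines "f \<equiv> (\<lambda>A::(real^'n) set. (\<lambda>x. M *v x) ` polar A)"
  shows "(\<exists>\<Phi> \<Psi>. aw_homeomorphism \<Phi> \<Psi> \<and> (\<forall>A\<in>K0. f A = \<Phi> (polar (\<Psi> A))))
            \<and> (\<exists>!A. A \<in> K0 \<and> f A = A)"
proof -
  interpret onb B by (rule ob)
  define l where "l = W (\<lambda>b. sqrt (\<mu> b))"
  define l' where "l' = W (\<lambda>b. 1 / sqrt (\<mu> b))"
  have ll': "l (l' x) = x" for x
    unfolding l_def l'_def W_comp by (rule W_one) (use pos in fastforce)
  have l'l: "l' (l x) = x" for x
    unfolding l_def l'_def W_comp by (rule W_one) (use pos in fastforce)
  have ll: "l (l x) = M *v x" for x
  proof -
    have "l (l x) = W (\<lambda>b. sqrt (\<mu> b) * sqrt (\<mu> b)) x" unfolding l_def W_comp ..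
    also have "\<dots> = W \<mu> x" by (rule W_cong) (use pos in fastforce)
    also have "\<dots> = M *v x" using M_as_W[OF sym ob eig] by simp
    finally show ?thesis .
  qed
  have lin: "linear l" "linear l'" unfolding l_def l'_def by (rule W_linear)+
  have lsym: "l x \<bullet> y = x \<bullet> l y" "l' x \<bullet> y = x \<bullet> l' y" for x y
    unfolding l_def l'_def by (rule W_sym)+
  define \<Phi> where "\<Phi> = (\<lambda>A::(real^'n) set. l ` A)"
  define \<Psi> where "\<Psi> = (\<lambda>A::(real^'n) set. l' ` A)"
  have \<Psi>\<Phi>: "\<Psi> (\<Phi> X) = X" for X by (simp add: \<Phi>_def \<Psi>_def image_image l'l)
  have \<Phi>\<Psi>: "\<Phi> (\<Psi> X) = X" for X by (simp add: \<Phi>_def \<Psi>_def image_image ll')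
  have hom: "aw_homeomorphism \<Phi> \<Psi>"
    unfolding aw_homeomorphism_def
  proof (intro conjI ballI)
    show "\<Phi> ` K0 \<subseteq> K0" using K0_image[OF lin(1) l'l] by (auto simp: \<Phi>_def)
    show "\<Psi> ` K0 \<subseteq> K0" using K0_image[OF lin(2) ll'] by (auto simp: \<Psi>_def)
    show "aw_continuous \<Phi>" unfolding \<Phi>_def by (rule aw_cont_lin[OF lin l'l])
    show "aw_continuous \<Psi>" unfolding \<Psi>_def by (rule aw_cont_lin[OF lin(2) lin(1) ll'])
  qed (simp_all add: \<Psi>\<Phi> \<Phi>\<Psi>)
  have pimg: "polar (\<Psi> A) = l ` polar A" for A
  proof -
    have "polar (\<Psi> A) = {y. l' y \<in> polar A}" unfolding \<Psi>_def by (rule polar_image) (rule lsym(2))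
    also have "\<dots> = l ` polar A"
    proof
      show "{y. l' y \<in> polar A} \<subseteq> l ` polar A"
      proof
        fix y assume "y \<in> {y. l' y \<in> polar A}"
        then show "y \<in> l ` polar A" using ll'[of y] by (metis image_eqI mem_Collect_eq)
      qed
      show "l ` polar A \<subseteq> {y. l' y \<in> polar A}" using l'l by auto
    qed
    finally show ?thesis .
  qed
  have feq: "f A = \<Phi> (polar (\<Psi> A))" for A
    by (simp add: f_def pimg \<Phi>_def image_image ll)
  define A0 where "A0 = l ` cball 0 1"
  have cb: "cball (0::real^'n) 1 \<in> K0" by (simp add: K0_def closed_cball convex_cball)
  have A0K: "A0 \<in> K0" unfolding A0_def by (rule K0_image[OF lin(1) l'l cb])
  have A0f: "f A0 = A0"
  proof -
    have "\<Psi> A0 = cball 0 1" using \<Psi>\<Phi> by (simp add: A0_def \<Phi>_def)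
    then show ?thesis by (simp add: feq polar_cball \<Phi>_def A0_def)
  qed
  have uniq: "A = A0" if A: "A \<in> K0" "f A = A" for A
  proof -
    define C where "C = \<Psi> A"
    have "\<Phi> (polar C) = A" using A(2) by (simp add: feq C_def)
    then have pC: "polar C = C" using \<Psi>\<Phi>[of "polar C"] by (simp add: C_def)
    have sub: "C \<subseteq> cball 0 1"
    proof
      fix x assume x: "x \<in> C"
      then have "x \<in> polar C" using pC by simp
      then have "x \<bullet> x \<le> 1" using x by (auto simp: polar_def)
      then have "(norm x)^2 \<le> 1" by (simp add: power2_norm_eq_inner)
      then have "norm x \<le> 1" by (simp add: power_le_one_iff abs_square_le_1)
      then show "x \<in> cball 0 1" by simp
    qed
    then have "polar (cball 0 1) \<subseteq> polar C" by (rule polar_anti)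
    then have "cball 0 1 \<subseteq> C" using pC by (simp add: polar_cball)
    then have "C = cball 0 1" using sub by auto
    then show ?thesis using \<Phi>\<Psi>[of A] by (simp add: C_def A0_def \<Phi>_def)
  qed
  show ?thesis
  proof
    show "\<exists>\<Phi> \<Psi>. aw_homeomorphism \<Phi> \<Psi> \<and> (\<forall>A\<in>K0. f A = \<Phi> (polar (\<Psi> A)))"
      using hom feq by blast
    show "\<exists>!A. A \<in> K0 \<and> f A = A"
      using A0K A0f uniq by blast
  qed
qed


lemma sq_ineq1:
  fixes s t :: real assumes "t \<noteq> 0"
  shows "2 * (s * \<sigma>) \<le> s\<^sup>2 / t\<^sup>2 + \<sigma>\<^sup>2 * t\<^sup>2"
proof -
  have "0 \<le> (s / t - \<sigma> * t)\<^sup>2" by simp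
  also have "(s / t - \<sigma> * t)\<^sup>2 = s\<^sup>2 / t\<^sup>2 - 2 * (s * \<sigma>) + \<sigma>\<^sup>2 * t\<^sup>2"
    using assms by (simp add: power2_diff power_divide field_simps power2_eq_square)
  finally show ?thesis by simp
qed

lemma sq_ineq2:
  fixes m p q :: real assumes "m > 0"
  shows "2 * (p * q) \<le> p\<^sup>2 / m + m * q\<^sup>2"
proof -
  have "0 \<le> (p - m * q)\<^sup>2 / m" using assms by simp
  also have "(p - m * q)\<^sup>2 / m = p\<^sup>2 / m - 2 * (p * q) + m * q\<^sup>2"
    using assms by (simp add: power2_diff field_simps power2_eq_square)
  finally show ?thesis by simp
qed

locale p2 = onb B for B :: "(real^'n) set" +
  fixes M :: "real^'n^'n" and \<mu> :: "real^'n \<Rightarrow> real" and u :: "real^'n"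
  assumes sym: "transpose M = M" and eig: "\<forall>b\<in>B. M *v b = \<mu> b *\<^sub>R b"
    and nz: "\<forall>b\<in>B. \<mu> b \<noteq> 0" and uB: "u \<in> B" and neg: "\<mu> u < 0"
begin

definition g2 :: "real \<Rightarrow> real \<Rightarrow> real" where
  "g2 t s = (if s \<ge> 0 then s\<^sup>2 / t\<^sup>2 else s\<^sup>2 * t\<^sup>2 / (\<mu> u)\<^sup>2)"
definition h2 :: "real \<Rightarrow> real \<Rightarrow> real" where
  "h2 t s = (if s \<ge> 0 then s\<^sup>2 * t\<^sup>2 else s\<^sup>2 * (\<mu> u)\<^sup>2 / t\<^sup>2)"
definition Q :: "real^'n \<Rightarrow> real" where
  "Q x = (\<Sum>b\<in>B-{u}. (b \<bullet> x)\<^sup>2 / \<bar>\<mu> b\<bar>)"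
definition Q' :: "real^'n \<Rightarrow> real" where
  "Q' y = (\<Sum>b\<in>B-{u}. \<bar>\<mu> b\<bar> * (b \<bullet> y)\<^sup>2)"
definition At :: "real \<Rightarrow> (real^'n) set" where
  "At t = {x. g2 t (u \<bullet> x) + Q x \<le> 1}"
definition Pt :: "real \<Rightarrow> (real^'n) set" where
  "Pt t = {y. h2 t (u \<bullet> y) + Q' y \<le> 1}"

lemma lam_nz: "\<mu> u \<noteq> 0" using neg by simp

lemma g2_nonneg: "g2 t s \<ge> 0" by (simp add: g2_def)
lemma h2_nonneg: "h2 t s \<ge> 0" by (simp add: h2_def)
lemma Q_nonneg: "Q x \<ge> 0" unfolding Q_def by (intro sum_nonneg) simp
lemma Q'_nonneg: "Q' x \<ge> 0" unfolding Q'_def by (intro sum_nonneg) simp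

lemma ineq_u:
  assumes t: "t > 0"
  shows "2 * (s * \<sigma>) \<le> g2 t s + h2 t \<sigma>"
proof (cases "s \<ge> 0"; cases "\<sigma> \<ge> 0")
  assume "s \<ge> 0" "\<sigma> \<ge> 0"
  then show ?thesis using sq_ineq1[of t s \<sigma>] t by (simp add: g2_def h2_def)
next
  assume "s \<ge> 0" "\<not> \<sigma> \<ge> 0"
  then have "s * \<sigma> \<le> 0" by (simp add: mult_nonneg_nonpos)
  then show ?thesis using g2_nonneg[of t s] h2_nonneg[of t \<sigma>] by linarith
next
  assume "\<not> s \<ge> 0" "\<sigma> \<ge> 0"
  then have "s * \<sigma> \<le> 0" by (simp add: mult_nonpos_nonneg)
  then show ?thesis using g2_nonneg[of t s] h2_nonneg[of t \<sigma>] by linarith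
next
  assume a: "\<not> s \<ge> 0" "\<not> \<sigma> \<ge> 0"
  define c where "c = \<mu> u / t"
  have c: "c \<noteq> 0" using t lam_nz by (simp add: c_def)
  have "2 * (s * \<sigma>) \<le> s\<^sup>2 / c\<^sup>2 + \<sigma>\<^sup>2 * c\<^sup>2" by (rule sq_ineq1[OF c])
  moreover have "s\<^sup>2 / c\<^sup>2 = s\<^sup>2 * t\<^sup>2 / (\<mu> u)\<^sup>2" using t lam_nz by (simp add: c_def power_divide)
  moreover have "\<sigma>\<^sup>2 * c\<^sup>2 = \<sigma>\<^sup>2 * (\<mu> u)\<^sup>2 / t\<^sup>2" using t lam_nz by (simp add: c_def power_divide)
  ultimately show ?thesis using a by (simp add: g2_def h2_def)
qed

lemma g2_scale: "c > 0 \<Longrightarrow> g2 t (c * s) = c\<^sup>2 * g2 t s"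
  by (simp add: g2_def zero_le_mult_iff power_mult_distrib)

lemma g2_lam: "g2 t (\<mu> u * \<sigma>) = h2 t \<sigma>"
proof (cases "\<sigma> > 0")
  case True
  then have "\<not> \<mu> u * \<sigma> \<ge> 0" using neg by (simp add: mult_neg_pos not_le)
  then show ?thesis using True lam_nz by (simp add: g2_def h2_def power_mult_distrib)
next
  case False
  then have "\<mu> u * \<sigma> \<ge> 0" using neg by (simp add: mult_nonpos_nonpos)
  then show ?thesis using False lam_nz
    by (cases "\<sigma> = 0") (auto simp: g2_def h2_def power_mult_distrib power_divide)
qed

definition shat :: "real \<Rightarrow> real \<Rightarrow> real" where
  "shat t \<sigma> = (if \<sigma> \<ge> 0 then t\<^sup>2 * \<sigma> else \<sigma> * (\<mu> u)\<^sup>2 / t\<^sup>2)"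

lemma shat: assumes "t > 0"
  shows "g2 t (shat t \<sigma>) = h2 t \<sigma>" "shat t \<sigma> * \<sigma> = h2 t \<sigma>"
proof -
  show "shat t \<sigma> * \<sigma> = h2 t \<sigma>"
    by (simp add: shat_def h2_def power2_eq_square)
  show "g2 t (shat t \<sigma>) = h2 t \<sigma>"
  proof (cases "\<sigma> \<ge> 0")
    case True
    then show ?thesis using assms by (simp add: shat_def g2_def h2_def power_mult_distrib power2_eq_square)
  next
    case False
    then have "\<sigma> * (\<mu> u)\<^sup>2 / t\<^sup>2 < 0" using assms lam_nz
      by (simp add: divide_neg_pos mult_neg_pos)
    then show ?thesis using False assms lam_nz
      by (simp add: shat_def g2_def h2_def power_mult_distrib power_divide power2_eq_square)
  qed
qed

end


context p2
begin

lemma split_u: "(\<Sum>b\<in>B. F b) = F u + (\<Sum>b\<in>B-{u}. F b)"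
  by (rule sum.remove[OF fin uB])

lemma orth_u: "b \<in> B - {u} \<Longrightarrow> b \<bullet> u = 0"
  using po uB by (auto simp: pairwise_def orthogonal_def)

lemma mu_abs_pos: "b \<in> B \<Longrightarrow> \<bar>\<mu> b\<bar> > 0" using nz by auto

lemma polar_sup: assumes t: "t > 0" shows "Pt t \<subseteq> polar (At t)"
proof
  fix y assume y: "y \<in> Pt t"
  have "x \<bullet> y \<le> 1" if x: "x \<in> At t" for x
  proof -
    have "x \<bullet> y = (u \<bullet> x) * (u \<bullet> y) + (\<Sum>b\<in>B-{u}. (b \<bullet> x) * (b \<bullet> y))"
      using inner_expand[of x y] split_u by simp
    moreover have "2 * ((u \<bullet> x) * (u \<bullet> y)) \<le> g2 t (u \<bullet> x) + h2 t (u \<bullet> y)" by (rule ineq_u[OF t])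
    moreover have "2 * (\<Sum>b\<in>B-{u}. (b \<bullet> x) * (b \<bullet> y)) \<le> Q x + Q' y"
    proof -
      have "2 * (\<Sum>b\<in>B-{u}. (b \<bullet> x) * (b \<bullet> y)) = (\<Sum>b\<in>B-{u}. 2 * ((b \<bullet> x) * (b \<bullet> y)))"
        by (simp add: sum_distrib_left)
      also have "\<dots> \<le> (\<Sum>b\<in>B-{u}. (b \<bullet> x)\<^sup>2 / \<bar>\<mu> b\<bar> + \<bar>\<mu> b\<bar> * (b \<bullet> y)\<^sup>2)"
        by (intro sum_mono sq_ineq2) (use mu_abs_pos in auto)
      also have "\<dots> = Q x + Q' y" by (simp add: Q_def Q'_def sum.distrib)
      finally show ?thesis .
    qed
    moreover have "g2 t (u \<bullet> x) + Q x \<le> 1" using x by (simp add: At_def)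
    moreover have "h2 t (u \<bullet> y) + Q' y \<le> 1" using y by (simp add: Pt_def)
    ultimately show ?thesis by linarith
  qed
  then show "y \<in> polar (At t)" by (simp add: polar_def)
qed

lemma polar_sub: assumes t: "t > 0" shows "polar (At t) \<subseteq> Pt t"
proof
  fix y assume y: "y \<in> polar (At t)"
  define \<sigma> where "\<sigma> = u \<bullet> y"
  define N where "N = h2 t \<sigma> + Q' y"
  show "y \<in> Pt t"
  proof (cases "N \<le> 1")
    case True then show ?thesis by (simp add: Pt_def N_def \<sigma>_def)
  next
    case False
    then have Np: "N > 0" by simp
    define c where "c b = (if b = u then shat t \<sigma> else \<bar>\<mu> b\<bar> * (b \<bullet> y))" for b
    define x where "x = (1 / sqrt N) *\<^sub>R (\<Sum>b\<in>B. c b *\<^sub>R b)"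
    have xc: "b \<bullet> x = c b / sqrt N" if "b \<in> B" for b
      using coord[OF that, of c] by (simp add: x_def)
    have sN: "sqrt N > 0" "(sqrt N)\<^sup>2 = N" using Np by auto
    have "g2 t (u \<bullet> x) = g2 t ((1 / sqrt N) * shat t \<sigma>)" using xc[OF uB] by (simp add: c_def)
    also have "\<dots> = (1 / sqrt N)\<^sup>2 * g2 t (shat t \<sigma>)" by (rule g2_scale) (use sN in simp)
    also have "\<dots> = (1 / sqrt N)\<^sup>2 * h2 t \<sigma>" by (simp add: shat[OF t])
    also have "\<dots> = h2 t \<sigma> / N" using sN by (simp add: power_divide)
    finally have g: "g2 t (u \<bullet> x) = h2 t \<sigma> / N" .
    have "Q x = (\<Sum>b\<in>B-{u}. (\<bar>\<mu> b\<bar> * (b \<bullet> y))\<^sup>2 / N / \<bar>\<mu> b\<bar>)"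
      unfolding Q_def
      by (intro sum.cong refl) (simp add: xc c_def power_divide sN)
    also have "\<dots> = (\<Sum>b\<in>B-{u}. \<bar>\<mu> b\<bar> * (b \<bullet> y)\<^sup>2 / N)"
      by (intro sum.cong refl) (use mu_abs_pos in \<open>auto simp: power2_eq_square\<close>)
    also have "\<dots> = Q' y / N" by (simp add: Q'_def sum_divide_distrib)
    finally have q: "Q x = Q' y / N" .
    have "g2 t (u \<bullet> x) + Q x = 1" using g q Np by (simp add: N_def add_divide_distrib[symmetric])
    then have "x \<in> At t" by (simp add: At_def)
    then have xy: "x \<bullet> y \<le> 1" using y by (simp add: polar_def)
    have "x \<bullet> y = (1 / sqrt N) * (\<Sum>b\<in>B. c b * (b \<bullet> y))"
      by (simp add: x_def inner_sum_left)
    also have "(\<Sum>b\<in>B. c b * (b \<bullet> y)) = c u * (u \<bullet> y) + (\<Sum>b\<in>B-{u}. c b * (b \<bullet> y))"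
      by (rule split_u)
    also have "(\<Sum>b\<in>B-{u}. c b * (b \<bullet> y)) = Q' y"
      unfolding Q'_def by (intro sum.cong refl) (simp add: c_def power2_eq_square)
    also have "c u * (u \<bullet> y) = h2 t \<sigma>" using shat(2)[OF t, of \<sigma>] by (simp add: c_def \<sigma>_def)
    finally have "x \<bullet> y = N / sqrt N" by (simp add: N_def)
    also have "\<dots> = sqrt N" using sN by (metis power2_eq_square nonzero_mult_div_cancel_right less_irrefl)
    finally have "sqrt N \<le> 1" using xy by simp
    then have "N \<le> 1" by simp
    then show ?thesis using False by simp
  qed
qed

lemma polar_At: "t > 0 \<Longrightarrow> polar (At t) = Pt t"
  using polar_sub polar_sup by blast

lemma Mcoord: "b \<in> B \<Longrightarrow> b \<bullet> (M *v y) = \<mu> b * (b \<bullet> y)"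
proof -
  assume b: "b \<in> B"
  have "b \<bullet> (M *v y) = (M *v b) \<bullet> y" using msym[OF sym, of b y] by simp
  then show ?thesis using eig b by simp
qed

lemma M_mem: "M *v y \<in> At t \<longleftrightarrow> y \<in> Pt t"
proof -
  have "g2 t (u \<bullet> (M *v y)) = h2 t (u \<bullet> y)" using Mcoord[OF uB] g2_lam by simp
  moreover have "Q (M *v y) = Q' y"
    unfolding Q_def Q'_def
  proof (intro sum.cong refl)
    fix b assume b: "b \<in> B - {u}"
    have m: "\<bar>\<mu> b\<bar> > 0" using b mu_abs_pos by auto
    have "(b \<bullet> (M *v y))\<^sup>2 / \<bar>\<mu> b\<bar> = (\<mu> b * \<mu> b) * (b \<bullet> y)\<^sup>2 / \<bar>\<mu> b\<bar>"
      using b by (simp add: Mcoord power_mult_distrib power2_eq_square)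
    also have "\<mu> b * \<mu> b = \<bar>\<mu> b\<bar> * \<bar>\<mu> b\<bar>" by simp
    also have "\<bar>\<mu> b\<bar> * \<bar>\<mu> b\<bar> * (b \<bullet> y)\<^sup>2 / \<bar>\<mu> b\<bar> = \<bar>\<mu> b\<bar> * (b \<bullet> y)\<^sup>2"
      unfolding mult.assoc by (rule nonzero_mult_div_cancel_left) (use m in simp)
    finally show "(b \<bullet> (M *v y))\<^sup>2 / \<bar>\<mu> b\<bar> = \<bar>\<mu> b\<bar> * (b \<bullet> y)\<^sup>2" .
  qed
  ultimately show ?thesis by (simp add: At_def Pt_def)
qed

definition Minv where "Minv = W (\<lambda>b. 1 / \<mu> b)"

lemma MW: "M *v x = W \<mu> x"
  using M_as_W[OF sym _ eig] onb_axioms by simp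

lemma M_Minv: "M *v (Minv z) = z"
  unfolding MW Minv_def W_comp by (rule W_one) (use nz in auto)

lemma Minv_M: "Minv (M *v z) = z"
  unfolding MW Minv_def W_comp by (rule W_one) (use nz in auto)

lemma fix_At: assumes t: "t > 0"
  shows "(\<lambda>x. M *v x) ` polar (At t) = At t"
proof
  show "(\<lambda>x. M *v x) ` polar (At t) \<subseteq> At t" using M_mem polar_At[OF t] by auto
  show "At t \<subseteq> (\<lambda>x. M *v x) ` polar (At t)"
  proof
    fix z assume z: "z \<in> At t"
    then have "Minv z \<in> Pt t" using M_mem[of "Minv z"] M_Minv by simp
    then show "z \<in> (\<lambda>x. M *v x) ` polar (At t)" using polar_At[OF t] M_Minv[of z]
      by (metis image_eqI)
  qed
qed

end


lemma sq_le_norm: "norm (b::'a::real_inner) = 1 \<Longrightarrow> (b \<bullet> x)\<^sup>2 \<le> (norm x)\<^sup>2"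
proof -
  assume b: "norm b = 1"
  have "\<bar>b \<bullet> x\<bar> \<le> norm b * norm x" by (rule Cauchy_Schwarz_ineq2)
  then have "\<bar>b \<bullet> x\<bar> \<le> norm x" using b by simp
  then have "\<bar>b \<bullet> x\<bar>\<^sup>2 \<le> (norm x)\<^sup>2" by (rule power_mono) simp
  then show ?thesis by simp
qed

context p2
begin

lemma M_inj: "inj (\<lambda>x. M *v x)"
proof (rule injI)
  fix x y assume "M *v x = M *v y"
  then have "Minv (M *v x) = Minv (M *v y)" by simp
  then show "x = y" by (simp add: Minv_M)
qed

lemma g2_bound: assumes t: "t > 0" and g: "g2 t s \<le> 1"
  shows "s\<^sup>2 \<le> t\<^sup>2 + (\<mu> u)\<^sup>2 / t\<^sup>2"
proof (cases "s \<ge> 0")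
  case True
  then have "s\<^sup>2 / t\<^sup>2 \<le> 1" using g by (simp add: g2_def)
  then have "s\<^sup>2 \<le> t\<^sup>2" using t by (simp add: divide_le_eq)
  moreover have "(\<mu> u)\<^sup>2 / t\<^sup>2 \<ge> 0" by simp
  ultimately show ?thesis by linarith
next
  case False
  then have "s\<^sup>2 * t\<^sup>2 / (\<mu> u)\<^sup>2 \<le> 1" using g by (simp add: g2_def)
  then have "s\<^sup>2 * t\<^sup>2 \<le> (\<mu> u)\<^sup>2" using lam_nz by (simp add: divide_le_eq)
  then have "s\<^sup>2 \<le> (\<mu> u)\<^sup>2 / t\<^sup>2" using t by (simp add: le_divide_eq)
  moreover have "t\<^sup>2 \<ge> 0" by simp
  ultimately show ?thesis by linarith
qed

lemma g2_upper: assumes t: "t > 0"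
  shows "g2 t s \<le> s\<^sup>2 * (1 / t\<^sup>2 + t\<^sup>2 / (\<mu> u)\<^sup>2)"
proof -
  have a: "s\<^sup>2 / t\<^sup>2 = s\<^sup>2 * (1 / t\<^sup>2)" by simp
  have b: "s\<^sup>2 * t\<^sup>2 / (\<mu> u)\<^sup>2 = s\<^sup>2 * (t\<^sup>2 / (\<mu> u)\<^sup>2)" by simp
  have c: "s\<^sup>2 * (1 / t\<^sup>2 + t\<^sup>2 / (\<mu> u)\<^sup>2) = s\<^sup>2 * (1 / t\<^sup>2) + s\<^sup>2 * (t\<^sup>2 / (\<mu> u)\<^sup>2)"
    by (simp add: distrib_left)
  have d: "s\<^sup>2 * (1 / t\<^sup>2) \<ge> 0" "s\<^sup>2 * (t\<^sup>2 / (\<mu> u)\<^sup>2) \<ge> 0" by simp_all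
  show ?thesis
  proof (cases "s \<ge> 0")
    case True
    then have "g2 t s = s\<^sup>2 / t\<^sup>2" by (simp add: g2_def)
    then show ?thesis using a c d by linarith
  next
    case False
    then have "g2 t s = s\<^sup>2 * t\<^sup>2 / (\<mu> u)\<^sup>2" by (simp add: g2_def)
    then show ?thesis using b c d by linarith
  qed
qed

lemma At_K0b: assumes t: "t > 0" shows "At t \<in> K0b"
proof -
  have eq: "At t = (\<lambda>x. M *v x) ` polar (At t)" using fix_At[OF t] by simp
  have cl: "closed (At t)"
    by (subst eq, rule closed_injective_linear_image) (simp_all add: polar_closed M_inj)
  have cv: "convex (At t)"
    by (subst eq, rule convex_linear_image) (simp_all add: polar_convex)
  define K where "K b = (if b = u then t\<^sup>2 + (\<mu> u)\<^sup>2 / t\<^sup>2 else \<bar>\<mu> b\<bar>)" for b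
  have bd: "norm x \<le> sqrt (\<Sum>b\<in>B. K b)" if x: "x \<in> At t" for x
  proof -
    have xs: "g2 t (u \<bullet> x) + Q x \<le> 1" using x by (simp add: At_def)
    have "(b \<bullet> x)\<^sup>2 \<le> K b" if b: "b \<in> B" for b
    proof (cases "b = u")
      case True
      then show ?thesis using g2_bound[OF t, of "u \<bullet> x"] xs Q_nonneg[of x] by (simp add: K_def)
    next
      case False
      have "(b \<bullet> x)\<^sup>2 / \<bar>\<mu> b\<bar> \<le> Q x" unfolding Q_def
        by (rule member_le_sum[of b "B - {u}" "\<lambda>b. (b \<bullet> x)\<^sup>2 / \<bar>\<mu> b\<bar>"]) (use b False fin in auto)
      then have "(b \<bullet> x)\<^sup>2 / \<bar>\<mu> b\<bar> \<le> 1" using xs g2_nonneg[of t "u \<bullet> x"] by linarith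
      then show ?thesis using False mu_abs_pos[OF b] by (simp add: K_def divide_le_eq)
    qed
    then have "(\<Sum>b\<in>B. (b \<bullet> x) * (b \<bullet> x)) \<le> (\<Sum>b\<in>B. K b)"
      by (intro sum_mono) (simp add: power2_eq_square)
    then have "x \<bullet> x \<le> (\<Sum>b\<in>B. K b)" using inner_expand[of x x] by simp
    then show ?thesis by (simp add: norm_eq_sqrt_inner)
  qed
  have bdd: "bounded (At t)" unfolding bounded_iff using bd by blast
  define C where "C = 1 / t\<^sup>2 + t\<^sup>2 / (\<mu> u)\<^sup>2 + (\<Sum>b\<in>B-{u}. 1 / \<bar>\<mu> b\<bar>)"
  have Cs: "(\<Sum>b\<in>B-{u}. 1 / \<bar>\<mu> b\<bar>) \<ge> 0" by (intro sum_nonneg) simp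
  have "1 / t\<^sup>2 > 0" using t by simp
  moreover have "t\<^sup>2 / (\<mu> u)\<^sup>2 \<ge> 0" by simp
  ultimately have Cp: "C > 0" unfolding C_def using Cs by linarith
  define r where "r = min 1 (1 / C)"
  have rp: "r > 0" using Cp by (simp add: r_def)
  have "ball 0 r \<subseteq> At t"
  proof
    fix x :: "real^'n" assume "x \<in> ball 0 r"
    then have nx: "norm x < r" by simp
    define n2 where "n2 = (norm x)\<^sup>2"
    have "norm x < 1" using nx by (simp add: r_def)
    then have "n2 \<le> norm x" unfolding n2_def power2_eq_square
      by (intro mult_left_le) auto
    then have n2C: "n2 < 1 / C" using nx by (simp add: r_def)
    have n20: "n2 \<ge> 0" by (simp add: n2_def)
    have "g2 t (u \<bullet> x) \<le> (u \<bullet> x)\<^sup>2 * (1 / t\<^sup>2 + t\<^sup>2 / (\<mu> u)\<^sup>2)" by (rule g2_upper[OF t])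
    also have "\<dots> \<le> n2 * (1 / t\<^sup>2 + t\<^sup>2 / (\<mu> u)\<^sup>2)"
      by (intro mult_right_mono) (use sq_le_norm nb uB in \<open>auto simp: n2_def\<close>)
    finally have g: "g2 t (u \<bullet> x) \<le> n2 * (1 / t\<^sup>2 + t\<^sup>2 / (\<mu> u)\<^sup>2)" .
    have "Q x \<le> (\<Sum>b\<in>B-{u}. n2 * (1 / \<bar>\<mu> b\<bar>))" unfolding Q_def
    proof (intro sum_mono)
      fix b assume b: "b \<in> B - {u}"
      have "(b \<bullet> x)\<^sup>2 \<le> n2" using sq_le_norm nb b by (auto simp: n2_def)
      then show "(b \<bullet> x)\<^sup>2 / \<bar>\<mu> b\<bar> \<le> n2 * (1 / \<bar>\<mu> b\<bar>)"
        by (simp add: divide_right_mono)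
    qed
    also have "\<dots> = n2 * (\<Sum>b\<in>B-{u}. 1 / \<bar>\<mu> b\<bar>)" by (simp add: sum_distrib_left)
    finally have q: "Q x \<le> n2 * (\<Sum>b\<in>B-{u}. 1 / \<bar>\<mu> b\<bar>)" .
    have "g2 t (u \<bullet> x) + Q x \<le> n2 * C" using g q by (simp add: C_def distrib_left)
    also have "\<dots> \<le> (1 / C) * C" using n2C Cp by (intro mult_right_mono) auto
    also have "\<dots> = 1" using Cp by simp
    finally show "x \<in> At t" by (simp add: At_def)
  qed
  then have "0 \<in> interior (At t)" using rp mem_interior by blast
  then show ?thesis using cl cv bdd by (simp add: K0b_def compact_eq_bounded_closed)
qed

lemma At_mem_scaled: assumes t: "t > 0" and c: "c \<ge> 0"
  shows "c *\<^sub>R u \<in> At t \<longleftrightarrow> c\<^sup>2 / t\<^sup>2 \<le> 1"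
proof -
  have uu: "u \<bullet> u = 1" using nb uB by (simp add: norm_eq_1)
  have "Q (c *\<^sub>R u) = 0" unfolding Q_def by (intro sum.neutral) (simp add: orth_u)
  then show ?thesis using c uu by (simp add: At_def g2_def)
qed

lemma At_inj: assumes "s > 0" "t > 0" "At s = At t" shows "s = t"
proof (rule ccontr)
  assume "s \<noteq> t"
  then consider "s < t" | "t < s" by linarith
  then show False
  proof cases
    case 1
    have "t *\<^sub>R u \<in> At t" using At_mem_scaled[of t t] assms by simp
    moreover have "t *\<^sub>R u \<notin> At s" using At_mem_scaled[of s t] assms 1
      by (simp add: divide_le_eq power_strict_mono)
    ultimately show False using assms by simp
  next
    case 2
    have "s *\<^sub>R u \<in> At s" using At_mem_scaled[of s s] assms by simp
    moreover have "s *\<^sub>R u \<notin> At t" using At_mem_scaled[of t s] assms 2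
      by (simp add: divide_le_eq power_strict_mono)
    ultimately show False using assms by simp
  qed
qed

lemma part2: "infinite {A \<in> K0b. (\<lambda>x. M *v x) ` polar A = A}"
proof -
  have inj: "inj (\<lambda>n::nat. At (real (Suc n)))"
  proof (rule injI)
    fix m n :: nat assume "At (real (Suc m)) = At (real (Suc n))"
    then have "real (Suc m) = real (Suc n)" by (intro At_inj) auto
    then show "m = n" by simp
  qed
  have mem: "At (real (Suc n)) \<in> K0b \<and> (\<lambda>x. M *v x) ` polar (At (real (Suc n))) = At (real (Suc n))" for n
  proof -
    have pos: "real (Suc n) > 0" by simp
    show ?thesis using At_K0b[OF pos] fix_At[OF pos] by blast
  qed
  have "range (\<lambda>n::nat. At (real (Suc n))) \<subseteq> {A \<in> K0b. (\<lambda>x. M *v x) ` polar A = A}"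
    using mem by blast
  moreover have "infinite (range (\<lambda>n::nat. At (real (Suc n))))" by (rule range_inj_infinite[OF inj])
  ultimately show ?thesis using infinite_super by blast
qed

end


theorem theorem2:
  fixes M :: "real^'n^'n"
  assumes n2: "CARD('n) \<ge> 2"
    and sym: "transpose M = M"
    and iso: "invertible M"
  defines "f \<equiv> (\<lambda>A::(real^'n) set. (\<lambda>x. M *v x) ` polar A)"
  shows "((\<forall>x. x \<noteq> 0 \<longrightarrow> x \<bullet> (M *v x) > 0) \<longrightarrow>
            (\<exists>\<Phi> \<Psi>. aw_homeomorphism \<Phi> \<Psi> \<and> (\<forall>A\<in>K0. f A = \<Phi> (polar (\<Psi> A))))
            \<and> (\<exists>!A. A \<in> K0 \<and> f A = A))
       \<and> (\<not> (\<forall>x. x \<noteq> 0 \<longrightarrow> x \<bullet> (M *v x) > 0) \<longrightarrow>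
            infinite {A \<in> K0b. f A = A})"
proof -
  obtain B \<mu> where ob: "onb B" and eig: "\<forall>b\<in>B. M *v b = \<mu> b *\<^sub>R b"
    using spectral_basis[OF sym] by blast
  interpret onb B by (rule ob)
  have bc: "b \<bullet> (M *v x) = \<mu> b * (b \<bullet> x)" if "b \<in> B" for b x
  proof -
    have "b \<bullet> (M *v x) = (M *v b) \<bullet> x" using msym[OF sym, of b x] by simp
    then show ?thesis using eig that by simp
  qed
  have nz: "\<forall>b\<in>B. \<mu> b \<noteq> 0"
  proof (intro ballI notI)
    fix b assume b: "b \<in> B" and z: "\<mu> b = 0"
    obtain A' where A': "A' ** M = mat 1" using iso by (auto simp: invertible_def)
    have "b = (A' ** M) *v b" by (simp add: A' matrix_vector_mul_lid)
    also have "\<dots> = A' *v (M *v b)" by (simp add: matrix_vector_mul_assoc)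
    also have "M *v b = 0" using eig b z by simp
    finally have "b = 0" by simp
    then show False using nb b by force
  qed
  show ?thesis
  proof (rule conjI; rule impI)
    assume pd: "\<forall>x. x \<noteq> 0 \<longrightarrow> x \<bullet> (M *v x) > 0"
    have pos: "\<forall>b\<in>B. \<mu> b > 0"
    proof
      fix b assume b: "b \<in> B"
      have "b \<noteq> 0" using nb b by auto
      then have "b \<bullet> (M *v b) > 0" using pd by blast
      moreover have "b \<bullet> b = 1" using nb b by (simp add: norm_eq_1)
      ultimately show "\<mu> b > 0" using bc[OF b, of b] by simp
    qed
    show "(\<exists>\<Phi> \<Psi>. aw_homeomorphism \<Phi> \<Psi> \<and> (\<forall>A\<in>K0. f A = \<Phi> (polar (\<Psi> A))))
            \<and> (\<exists>!A. A \<in> K0 \<and> f A = A)"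
      using part1[OF sym ob eig pos] unfolding f_def by simp
  next
    assume npd: "\<not> (\<forall>x. x \<noteq> 0 \<longrightarrow> x \<bullet> (M *v x) > 0)"
    then obtain x where x: "x \<noteq> 0" "x \<bullet> (M *v x) \<le> 0" by (auto simp: not_less)
    have "\<exists>u\<in>B. \<mu> u < 0"
    proof (rule ccontr)
      assume "\<not> (\<exists>u\<in>B. \<mu> u < 0)"
      then have pos: "\<forall>b\<in>B. \<mu> b > 0" using nz by force
      have "\<exists>b\<in>B. b \<bullet> x \<noteq> 0"
      proof (rule ccontr)
        assume "\<not> (\<exists>b\<in>B. b \<bullet> x \<noteq> 0)"
        then have "(\<Sum>b\<in>B. (b \<bullet> x) *\<^sub>R b) = 0" by (intro sum.neutral) simp
        then show False using expand[of x] x(1) by simp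
      qed
      then obtain b0 where b0: "b0 \<in> B" "b0 \<bullet> x \<noteq> 0" by blast
      have "x \<bullet> (M *v x) = (\<Sum>b\<in>B. (b \<bullet> x) * (b \<bullet> (M *v x)))" by (rule inner_expand)
      also have "\<dots> = (\<Sum>b\<in>B. \<mu> b * (b \<bullet> x)\<^sup>2)"
        by (intro sum.cong refl) (simp add: bc power2_eq_square)
      also have "\<dots> > 0"
      proof (rule sum_pos2[OF fin b0(1)])
        show "0 < \<mu> b0 * (b0 \<bullet> x)\<^sup>2" using pos b0 by simp
        show "\<And>i. i \<in> B \<Longrightarrow> 0 \<le> \<mu> i * (i \<bullet> x)\<^sup>2" using pos by (simp add: less_imp_le)
      qed
      finally show False using x(2) by simp
    qed
    then obtain u where uB: "u \<in> B" and neg: "\<mu> u < 0" by blast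
    interpret P: p2 B M \<mu> u
      by (intro p2.intro ob p2_axioms.intro sym eig nz uB neg)
    show "infinite {A \<in> K0b. f A = A}" unfolding f_def by (rule P.part2)
  qed
qed


end
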